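(* For $i\ge1$ let $u^i:[0,1]\to{\bf Q}_2(\mathbb{R})$ be the pluri-diamond with $u^i(1/3)=2[[0]]$ which is a diamond exactly above the closed middle-third intervals removed in the first $i$ steps of the construction of the Cantor ternary set (i.e. above $[1/3,2/3]$ for $i=1$; above $[1/3,2/3],[1/9,2/9],[7/9,8/9]$ for $i=2$; etc.) and is of the form $x\mapsto2[[x+p]]$ on each remaining interval. Write $u^i=[[u^i_{\min}]]+[[u^i_{\max}]]$ with $u^i_{\min}\le u^i_{\max}$. Suppose that along a subsequence $u^i_{\min}\to u_{\min}$ and $u^i_{\max}\to u_{\max}$ uniformly on $[0,1]$, and set $u=[[u_{\min}]]+[[u_{\max}]]$. Then $u$ is a Dirichlet $4$-quasiminimizer on $(0,1)$ (for every interval $(a,b)\subset(0,1)$, $\mathrm{Dir}(u;(a,b))\le4\,\mathrm{Dir}(v;(a,b))$ with $v$ Dirichlet minimizing on $(a,b)$ with $v(a)=u(a)$, $v(b)=u(b)$), and the branch set of $u$ is the Cantor ternary set $T$.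
   Context: ${\bf Q}_2(\mathbb{R})$ is the space of unordered pairs $[[x]]+[[y]]$ of reals with metric $\mathcal{G}([[x_1]]+[[x_2]],[[y_1]]+[[y_2]])=\min_\sigma(\sum_i|x_i-y_{\sigma(i)}|^2)^{1/2}$. For Lipschitz $u=[[u_1]]+[[u_2]]$ with $u_1\le u_2$, $\mathrm{Dir}(u;I)=\int_I(u_1')^2+(u_2')^2dx$; Dirichlet minimizing with given endpoint values means minimizing $\mathrm{Dir}$ among (Sobolev) ${\bf Q}_2(\mathbb{R})$-valued maps with those endpoint values. A diamond above $[a,b]$ is a map whose graph is the parallelogram with vertices $(a,h),((a+b)/2,h),((a+b)/2,h+(b-a)/2),(b,h+(b-a)/2)$ for some $h\in\mathbb{R}$. A pluri-diamond is a continuous $u:[0,1]\to{\bf Q}_2(\mathbb{R})$ admitting a partition of $[0,1]$ into intervals on each of which $u$ is a diamond or of the form $x\mapsto2[[x+p]]$, $p\in\mathbb{R}$. For a continuous multiple-valued $u$, let $\sigma(x)=\mathrm{card}(\mathrm{spt}\,u(x))$; the branch set of $u$ is the set of points where $\sigma$ is discontinuous. $T=\bigcap_iT_i$ with $T_1=[0,1/3]\cup[2/3,1]$, $T_2=[0,1/9]\cup[2/9,1/3]\cup[2/3,7/9]\cup[8/9,1]$, etc. *)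

theory Defs
  imports "HOL-Analysis.Analysis"
begin

text \<open>A map into Q_2(R) is represented by its ordered branches f1 \<le> f2,
  i.e. u = [[f1]] + [[f2]].\<close>

text \<open>Diamond above [a,b]: graph is the parallelogram with vertices
  (a,h), (m,h), (m,h+(b-a)/2), (b,h+(b-a)/2), m = (a+b)/2.\<close>
definition is_diamond :: "(real \<Rightarrow> real) \<Rightarrow> (real \<Rightarrow> real) \<Rightarrow> real \<Rightarrow> real \<Rightarrow> bool" where
  "is_diamond f1 f2 a b \<longleftrightarrow> a < b \<and> (\<exists>h. \<forall>x\<in>{a..b}.
      f1 x = (if x \<le> (a+b)/2 then h else h + (x - (a+b)/2)) \<and>
      f2 x = (if x \<le> (a+b)/2 then h + (x - a) else h + (b-a)/2))"

definition is_double_line :: "(real \<Rightarrow> real) \<Rightarrow> (real \<Rightarrow> real) \<Rightarrow> real \<Rightarrow> real \<Rightarrow> bool" where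
  "is_double_line f1 f2 a b \<longleftrightarrow> (\<exists>p. \<forall>x\<in>{a..b}. f1 x = x + p \<and> f2 x = x + p)"

definition pluri_diamond :: "(real \<Rightarrow> real) \<Rightarrow> (real \<Rightarrow> real) \<Rightarrow> bool" where
  "pluri_diamond f1 f2 \<longleftrightarrow>
     (\<forall>x\<in>{0..1}. f1 x \<le> f2 x) \<and> continuous_on {0..1} f1 \<and> continuous_on {0..1} f2 \<and>
     (\<exists>ts::real list. length ts \<ge> 2 \<and> sorted_wrt (<) ts \<and> hd ts = 0 \<and> last ts = 1 \<and>
        (\<forall>k. Suc k < length ts \<longrightarrow>
           is_diamond f1 f2 (ts!k) (ts!Suc k) \<or> is_double_line f1 f2 (ts!k) (ts!Suc k)))"

fun cantor_intervals :: "nat \<Rightarrow> (real \<times> real) set" where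
  "cantor_intervals 0 = {(0,1)}"
| "cantor_intervals (Suc n) =
     (\<Union>(a,b)\<in>cantor_intervals n. {(a, a + (b-a)/3), (b - (b-a)/3, b)})"

definition cantor_step :: "nat \<Rightarrow> real set" where
  "cantor_step n = (\<Union>(a,b)\<in>cantor_intervals n. {a..b})"

definition cantor_set :: "real set" where
  "cantor_set = (\<Inter>n. cantor_step n)"

definition removed_intervals :: "nat \<Rightarrow> (real \<times> real) set" where
  "removed_intervals i =
     (\<Union>n<i. (\<lambda>(a,b). (a + (b-a)/3, b - (b-a)/3)) ` cantor_intervals n)"

text \<open>Dirichlet energy on (a,b) of [[f1]]+[[f2]] (f1 \<le> f2), via the a.e. derivatives.\<close>
definition Dir :: "(real \<Rightarrow> real) \<Rightarrow> (real \<Rightarrow> real) \<Rightarrow> real \<Rightarrow> real \<Rightarrow> ennreal" where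
  "Dir f1 f2 a b = (\<integral>\<^sup>+ x\<in>{a<..<b}. ennreal ((deriv f1 x)\<^sup>2 + (deriv f2 x)\<^sup>2) \<partial>lborel)"

text \<open>W^{1,2}(a,b) real functions: absolutely continuous with square integrable derivative.\<close>
definition sobolev12 :: "real \<Rightarrow> real \<Rightarrow> (real \<Rightarrow> real) \<Rightarrow> bool" where
  "sobolev12 a b f \<longleftrightarrow> (\<exists>g. g absolutely_integrable_on {a..b} \<and>
      (\<lambda>x. (g x)\<^sup>2) integrable_on {a..b} \<and>
      (\<forall>x\<in>{a..b}. f x = f a + integral {a..x} g))"

definition admissible :: "real \<Rightarrow> real \<Rightarrow> real \<Rightarrow> real \<Rightarrow> real \<Rightarrow> real \<Rightarrow>
    (real \<Rightarrow> real) \<Rightarrow> (real \<Rightarrow> real) \<Rightarrow> bool" where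
  "admissible a b p1 p2 q1 q2 v1 v2 \<longleftrightarrow>
     sobolev12 a b v1 \<and> sobolev12 a b v2 \<and> (\<forall>x\<in>{a..b}. v1 x \<le> v2 x) \<and>
     v1 a = p1 \<and> v2 a = p2 \<and> v1 b = q1 \<and> v2 b = q2"

definition dir_minimizing :: "real \<Rightarrow> real \<Rightarrow> real \<Rightarrow> real \<Rightarrow> real \<Rightarrow> real \<Rightarrow>
    (real \<Rightarrow> real) \<Rightarrow> (real \<Rightarrow> real) \<Rightarrow> bool" where
  "dir_minimizing a b p1 p2 q1 q2 v1 v2 \<longleftrightarrow>
     admissible a b p1 p2 q1 q2 v1 v2 \<and>
     (\<forall>w1 w2. admissible a b p1 p2 q1 q2 w1 w2 \<longrightarrow> Dir v1 v2 a b \<le> Dir w1 w2 a b)"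

definition dir_quasiminimizer :: "real \<Rightarrow> (real \<Rightarrow> real) \<Rightarrow> (real \<Rightarrow> real) \<Rightarrow> bool" where
  "dir_quasiminimizer K f1 f2 \<longleftrightarrow>
     (\<forall>a b. 0 \<le> a \<and> a < b \<and> b \<le> 1 \<longrightarrow>
        (\<forall>v1 v2. dir_minimizing a b (f1 a) (f2 a) (f1 b) (f2 b) v1 v2 \<longrightarrow>
           Dir f1 f2 a b \<le> ennreal K * Dir v1 v2 a b))"

definition branch_set :: "(real \<Rightarrow> real) \<Rightarrow> (real \<Rightarrow> real) \<Rightarrow> real set" where
  "branch_set f1 f2 = {x\<in>{0..1}.
     \<not> continuous (at x within {0..1}) (\<lambda>y. real (card {f1 y, f2 y}))}"

end

theory Submission
  imports Defs
begin


lemma bad_set_negligible: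
  fixes F g :: "real \<Rightarrow> real" and a b \<alpha> :: real
  assumes gi: "g integrable_on {a..b}"
    and rep: "\<And>x. x \<in> {a..b} \<Longrightarrow> F x = F a + integral {a..x} g"
    and al: "\<alpha> > 0"
  shows "negligible {x\<in>{a<..<b}. \<forall>\<delta>>0. \<exists>t. 0 < \<bar>t\<bar> \<and> \<bar>t\<bar> < \<delta> \<and> \<alpha> * \<bar>t\<bar> < \<bar>F (x+t) - F x - t * g x\<bar>}"
    (is "negligible ?E")
proof (unfold negligible_outer_le, intro allI impI)
  fix e :: real assume e: "e > 0"
  define \<epsilon> where "\<epsilon> = e * \<alpha> / 2"
  have \<epsilon>: "\<epsilon> > 0" using e al by (simp add: \<epsilon>_def)
  have gi': "g integrable_on cbox a b" using gi by simp
  obtain \<gamma> where gam: "gauge \<gamma>"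
    and hl: "\<And>p. \<lbrakk>p tagged_partial_division_of (cbox a b); \<gamma> fine p\<rbrakk> \<Longrightarrow>
             sum (\<lambda>(x,k). norm(measure lborel k *\<^sub>R g x - integral k g)) p < \<epsilon>"
    using Henstock_lemma[OF gi' \<epsilon>] by blast
  have intI: "integral {u..v} g = F v - F u" if "a \<le> u" "u \<le> v" "v \<le> b" for u v
  proof -
    have "integral {a..u} g + integral {u..v} g = integral {a..v} g"
      using Henstock_Kurzweil_Integration.integral_combine[where a=a and c=u and b=v and f=g] integrable_on_subinterval[OF gi, of a v] that by auto
    then show ?thesis using rep[of u] rep[of v] that by auto
  qed
  define K where "K = {(x,t). x \<in> ?E \<and> 0 < t \<and> cball x t \<subseteq> \<gamma> x \<and> cball x t \<subseteq> {a<..<b} \<and>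
        (\<alpha> * t < \<bar>F (x+t) - F x - t * g x\<bar> \<or> \<alpha> * t < \<bar>F (x-t) - F x + t * g x\<bar>)}"
  obtain C where Cc: "countable C" and CK: "C \<subseteq> K"
    and Cdis: "pairwise (\<lambda>i j. disjnt (cball (fst i) (snd i)) (cball (fst j) (snd j))) C"
    and Cneg: "negligible (?E - (\<Union>i\<in>C. cball (fst i) (snd i)))"
  proof (rule Vitali_covering_theorem_cballs[of K snd ?E fst])
    show "\<And>i. i \<in> K \<Longrightarrow> 0 < snd i" by (auto simp: K_def)
  next
    fix x d :: real assume xE: "x \<in> ?E" and d: "0 < d"
    have "open (\<gamma> x)" "x \<in> \<gamma> x" using gam by (auto simp: gauge_def)
    then obtain \<rho> where \<rho>: "\<rho> > 0" "ball x \<rho> \<subseteq> \<gamma> x" by (meson openE)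
    have xab: "a < x" "x < b" using xE by auto
    define \<delta> where "\<delta> = min d (min (\<rho>/2) (min ((x-a)/2) ((b-x)/2)))"
    have \<delta>: "\<delta> > 0" using d \<rho> xab by (simp add: \<delta>_def)
    obtain t where t: "0 < \<bar>t\<bar>" "\<bar>t\<bar> < \<delta>" "\<alpha> * \<bar>t\<bar> < \<bar>F (x+t) - F x - t * g x\<bar>"
      using xE \<delta> by blast
    have c1: "cball x \<bar>t\<bar> \<subseteq> \<gamma> x"
    proof -
      have "cball x \<bar>t\<bar> \<subseteq> ball x \<rho>" using t \<delta> by (auto simp: \<delta>_def dist_real_def)
      then show ?thesis using \<rho> by blast
    qed
    have c2: "cball x \<bar>t\<bar> \<subseteq> {a<..<b}" using t \<delta> by (auto simp: \<delta>_def dist_real_def cball_eq_atLeastAtMost)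
    have c3: "\<alpha> * \<bar>t\<bar> < \<bar>F (x+\<bar>t\<bar>) - F x - \<bar>t\<bar> * g x\<bar> \<or> \<alpha> * \<bar>t\<bar> < \<bar>F (x-\<bar>t\<bar>) - F x + \<bar>t\<bar> * g x\<bar>"
      using t by (cases "t \<ge> 0") auto
    show "\<exists>i. i \<in> K \<and> x \<in> cball (fst i) (snd i) \<and> snd i < d"
      by (rule exI[of _ "(x,\<bar>t\<bar>)"]) (use xE t c1 c2 c3 \<delta> in \<open>auto simp: K_def \<delta>_def\<close>)
  qed auto
  define J where "J = (\<lambda>(x::real,t::real). if \<alpha> * t < \<bar>F (x+t) - F x - t * g x\<bar> then {x..x+t} else {x-t..x})"
  have Jprops: "J i \<subseteq> cball (fst i) (snd i) \<and> fst i \<in> J i \<and> measure lborel (J i) = snd i \<and>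
      (\<exists>u v. J i = cbox u v) \<and> J i \<subseteq> {a..b} \<and> \<alpha> * snd i < norm (measure lborel (J i) *\<^sub>R g (fst i) - integral (J i) g)"
    if "i \<in> K" for i
  proof -
    obtain x t where i: "i = (x,t)" by fastforce
    have k: "x \<in> ?E" "0 < t" "cball x t \<subseteq> {a<..<b}"
      "\<alpha> * t < \<bar>F (x+t) - F x - t * g x\<bar> \<or> \<alpha> * t < \<bar>F (x-t) - F x + t * g x\<bar>"
      using that by (auto simp: K_def i)
    have ab: "a < x - t" "x + t < b" using k(2) subsetD[OF k(3), of "x-t"] subsetD[OF k(3), of "x+t"] by (auto simp: cball_eq_atLeastAtMost)
    show ?thesis
    proof (cases "\<alpha> * t < \<bar>F (x+t) - F x - t * g x\<bar>")
      case True
      then have Ji: "J (x,t) = {x..x+t}" by (simp add: J_def)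
      have "integral {x..x+t} g = F (x+t) - F x" using intI[of x "x+t"] ab k by auto
      then show ?thesis using True ab k unfolding i by (auto simp: Ji cball_eq_atLeastAtMost abs_minus_commute)
    next
      case False
      then have Ji: "J (x,t) = {x-t..x}" by (simp add: J_def)
      have "integral {x-t..x} g = F x - F (x-t)" using intI[of "x-t" x] ab k by auto
      moreover have "\<alpha> * t < \<bar>F (x-t) - F x + t * g x\<bar>" using False k by auto
      moreover have ex: "\<exists>u v. J (x,t) = cbox u v" using Ji cbox_interval by metis
      ultimately show ?thesis using ab k unfolding i by (auto simp: Ji cball_eq_atLeastAtMost abs_minus_commute algebra_simps)
    qed
  qed
  have finsum: "measure lebesgue (\<Union>i\<in>D. cball (fst i) (snd i)) \<le> e" if D: "D \<subseteq> C" "finite D" for D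
  proof -
    define p where "p = (\<lambda>i. (fst i, J i)) ` D"
    have inj: "inj_on (\<lambda>i. (fst i, J i)) D"
    proof (rule inj_onI)
      fix i j assume ij: "i \<in> D" "j \<in> D" "(fst i, J i) = (fst j, J j)"
      have iK: "i \<in> K" "j \<in> K" using ij CK D by auto
      have "fst i \<in> J i" "fst j \<in> J j" "J i \<subseteq> cball (fst i) (snd i)" "J j \<subseteq> cball (fst j) (snd j)"
        using Jprops[OF iK(1)] Jprops[OF iK(2)] by auto
      then have "fst i \<in> cball (fst i) (snd i)" "fst i \<in> cball (fst j) (snd j)"
        using ij(3) by auto
      then show "i = j" using Cdis ij D unfolding pairwise_def disjnt_def by blast
    qed
    have tp: "p tagged_partial_division_of (cbox a b)"
    proof -
      have dis: "interior (J i) \<inter> interior (J j) = {}" if "i \<in> D" "j \<in> D" "i \<noteq> j" for i j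
      proof -
        have "disjnt (cball (fst i) (snd i)) (cball (fst j) (snd j))"
          using Cdis that D unfolding pairwise_def by blast
        moreover have "J i \<subseteq> cball (fst i) (snd i)" "J j \<subseteq> cball (fst j) (snd j)"
          using Jprops that CK D by blast+
        ultimately show ?thesis using interior_subset[of "J i"] interior_subset[of "J j"] unfolding disjnt_def by blast
      qed
      have m: "x \<in> k \<and> k \<subseteq> cbox a b \<and> (\<exists>u v. k = cbox u v)" if xk: "(x,k) \<in> p" for x k
      proof -
        obtain i where i: "i \<in> D" "x = fst i" "k = J i" using xk unfolding p_def by blast
        then have "i \<in> K" using CK D by auto
        then show ?thesis using Jprops[of i] i by auto
      qed
      have d: "interior k1 \<inter> interior k2 = {}"
        if xk: "(x1,k1) \<in> p" "(x2,k2) \<in> p" "(x1,k1) \<noteq> (x2,k2)" for x1 k1 x2 k2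
      proof -
        obtain i where i: "i \<in> D" "x1 = fst i" "k1 = J i" using xk(1) unfolding p_def by blast
        obtain j where j: "j \<in> D" "x2 = fst j" "k2 = J j" using xk(2) unfolding p_def by blast
        have "i \<noteq> j" using i j xk(3) by auto
        then show ?thesis using dis i j by auto
      qed
      have "finite p" using D by (simp add: p_def)
      then show ?thesis unfolding tagged_partial_division_of_def using m d by blast
    qed
    have fp: "\<gamma> fine p"
    proof -
      have "J i \<subseteq> \<gamma> (fst i)" if "i \<in> D" for i
      proof -
        have iK: "i \<in> K" using that CK D by auto
        obtain x t where i: "i = (x,t)" by fastforce
        have "cball x t \<subseteq> \<gamma> x" using iK by (simp add: K_def i)
        then show ?thesis using Jprops[OF iK] i by auto
      qed
      then show ?thesis by (auto simp: fine_def p_def)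
    qed
    have "sum (\<lambda>(x,k). norm(measure lborel k *\<^sub>R g x - integral k g)) p < \<epsilon>" using hl[OF tp fp] .
    also have "sum (\<lambda>(x,k). norm(measure lborel k *\<^sub>R g x - integral k g)) p =
        (\<Sum>i\<in>D. norm(measure lborel (J i) *\<^sub>R g (fst i) - integral (J i) g))"
      unfolding p_def by (subst sum.reindex[OF inj]) (simp add: case_prod_unfold)
    finally have s1: "(\<Sum>i\<in>D. norm(measure lborel (J i) *\<^sub>R g (fst i) - integral (J i) g)) < \<epsilon>" .
    have "(\<Sum>i\<in>D. \<alpha> * snd i) \<le> (\<Sum>i\<in>D. norm(measure lborel (J i) *\<^sub>R g (fst i) - integral (J i) g))"
    proof (rule sum_mono)
      fix i assume "i \<in> D"
      then have "i \<in> K" using CK D by auto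
      from Jprops[OF this] have "\<alpha> * snd i < norm (measure lborel (J i) *\<^sub>R g (fst i) - integral (J i) g)" by blast
      then show "\<alpha> * snd i \<le> norm (measure lborel (J i) *\<^sub>R g (fst i) - integral (J i) g)" by simp
    qed
    with s1 have s2: "\<alpha> * (\<Sum>i\<in>D. snd i) < \<epsilon>" by (simp add: sum_distrib_left)
    have "measure lebesgue (\<Union>i\<in>D. cball (fst i) (snd i)) \<le> (\<Sum>i\<in>D. measure lebesgue (cball (fst i) (snd i)))"
      by (rule measure_UNION_le) (use D in auto)
    also have "\<dots> = (\<Sum>i\<in>D. 2 * snd i)"
      by (rule sum.cong) (use CK D in \<open>auto simp: K_def cball_eq_atLeastAtMost\<close>)
    also have "\<dots> \<le> e"
    proof -
      have "(\<Sum>i\<in>D. snd i) \<le> \<epsilon> / \<alpha>" using s2 al by (simp add: field_simps)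
      then show ?thesis using al by (simp add: \<epsilon>_def sum_distrib_left[symmetric])
    qed
    finally show ?thesis .
  qed
  have Um: "(\<Union>i\<in>C. cball (fst i) (snd i)) \<in> lmeasurable"
    by (rule fmeasurable_UN_bound[OF Cc _ finsum]) auto
  have Umeas: "measure lebesgue (\<Union>i\<in>C. cball (fst i) (snd i)) \<le> e"
    by (rule measure_UN_bound[OF Cc _ finsum]) auto
  let ?T = "(?E - (\<Union>i\<in>C. cball (fst i) (snd i))) \<union> (\<Union>i\<in>C. cball (fst i) (snd i))"
  have Nm: "(?E - (\<Union>i\<in>C. cball (fst i) (snd i))) \<in> lmeasurable"
    using Cneg by (simp add: negligible_iff_null_sets fmeasurableI_null_sets)
  show "\<exists>T. ?E \<subseteq> T \<and> T \<in> lmeasurable \<and> measure lebesgue T \<le> e"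
  proof (intro exI conjI)
    show "?E \<subseteq> ?T" by blast
    show "?T \<in> lmeasurable" using Nm Um by (rule fmeasurable.Un)
    have "measure lebesgue ?T \<le> measure lebesgue (?E - (\<Union>i\<in>C. cball (fst i) (snd i))) + measure lebesgue (\<Union>i\<in>C. cball (fst i) (snd i))"
      by (rule measure_Un_le) (use Nm Um fmeasurableD in auto)
    also have "\<dots> \<le> e" using Umeas negligible_imp_measure0[OF Cneg] by linarith
    finally show "measure lebesgue ?T \<le> e" .
  qed
qed

lemma indef_integral_deriv_ae:
  fixes F g :: "real \<Rightarrow> real" and a b :: real
  assumes gi: "g integrable_on {a..b}"
    and rep: "\<And>x. x \<in> {a..b} \<Longrightarrow> F x = F a + integral {a..x} g"
  shows "\<exists>N. negligible N \<and> (\<forall>x\<in>{a<..<b} - N. (F has_real_derivative g x) (at x))"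
proof -
  define E where "E = (\<lambda>n::nat. {x\<in>{a<..<b}. \<forall>\<delta>>0. \<exists>t. 0 < \<bar>t\<bar> \<and> \<bar>t\<bar> < \<delta> \<and>
      (1 / real (Suc n)) * \<bar>t\<bar> < \<bar>F (x+t) - F x - t * g x\<bar>})"
  have neg: "negligible (\<Union>n. E n)"
    by (rule negligible_Union_nat) (unfold E_def, rule bad_set_negligible[OF gi rep], auto)
  have "(F has_real_derivative g x) (at x)" if x: "x \<in> {a<..<b} - (\<Union>n. E n)" for x
  proof -
    have "((\<lambda>h. (F (x + h) - F x) / h) \<longlongrightarrow> g x) (at 0)"
    proof (rule tendstoI)
      fix e :: real assume e: "e > 0"
      obtain n where n: "inverse (real (Suc n)) < e" using reals_Archimedean[OF e] by blast
      have "x \<notin> E n" using x by blast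
      then have "\<not> (\<forall>\<delta>>0. \<exists>t. 0 < \<bar>t\<bar> \<and> \<bar>t\<bar> < \<delta> \<and>
          (1 / real (Suc n)) * \<bar>t\<bar> < \<bar>F (x+t) - F x - t * g x\<bar>)" using x unfolding E_def by blast
      then obtain \<delta> where \<delta>: "\<delta> > 0" and
        nb0: "\<forall>t. \<not> (0 < \<bar>t\<bar> \<and> \<bar>t\<bar> < \<delta> \<and> (1 / real (Suc n)) * \<bar>t\<bar> < \<bar>F (x+t) - F x - t * g x\<bar>)"
        by blast
      have nb: "\<bar>F (x+t) - F x - t * g x\<bar> \<le> (1 / real (Suc n)) * \<bar>t\<bar>" if "0 < \<bar>t\<bar>" "\<bar>t\<bar> < \<delta>" for t
        using nb0 that by (meson not_less)
      have "\<forall>h. h \<noteq> 0 \<and> dist h 0 < \<delta> \<longrightarrow> dist ((F (x + h) - F x) / h) (g x) < e"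
      proof (intro allI impI)
        fix h :: real assume h: "h \<noteq> 0 \<and> dist h 0 < \<delta>"
        then have h0: "0 < \<bar>h\<bar>" "\<bar>h\<bar> < \<delta>" by auto
        have "(F (x + h) - F x) / h - g x = (F (x+h) - F x - h * g x) / h"
          using h0 by (simp add: field_simps)
        then have "dist ((F (x + h) - F x) / h) (g x) = \<bar>F (x+h) - F x - h * g x\<bar> / \<bar>h\<bar>"
          by (simp add: dist_real_def abs_divide)
        also have "\<dots> \<le> 1 / real (Suc n)"
          using nb[OF h0] h0 by (simp add: divide_le_eq)
        also have "\<dots> < e" using n by (simp add: inverse_eq_divide)
        finally show "dist ((F (x + h) - F x) / h) (g x) < e" .
      qed
      then show "\<forall>\<^sub>F h in at 0. dist ((F (x + h) - F x) / h) (g x) < e"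
        unfolding eventually_at using \<delta> by blast
    qed
    then show ?thesis by (simp add: DERIV_def)
  qed
  with neg show ?thesis by blast
qed



lemma admissible_Dir_lower:
  assumes adm: "admissible a b p1 p2 q1 q2 v1 v2" and ab: "a < b"
    and incr: "b - a \<le> q1 + q2 - p1 - p2"
  shows "ennreal ((b-a)/2) \<le> Dir v1 v2 a b"
proof -
  have s1: "sobolev12 a b v1" and s2: "sobolev12 a b v2"
    and e: "v1 a = p1" "v2 a = p2" "v1 b = q1" "v2 b = q2"
    using adm unfolding admissible_def by auto
  obtain g1 where g1: "g1 absolutely_integrable_on {a..b}" "(\<lambda>x. (g1 x)\<^sup>2) integrable_on {a..b}"
      "\<And>x. x\<in>{a..b} \<Longrightarrow> v1 x = v1 a + integral {a..x} g1"
    using s1 unfolding sobolev12_def by blast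
  obtain g2 where g2: "g2 absolutely_integrable_on {a..b}" "(\<lambda>x. (g2 x)\<^sup>2) integrable_on {a..b}"
      "\<And>x. x\<in>{a..b} \<Longrightarrow> v2 x = v2 a + integral {a..x} g2"
    using s2 unfolding sobolev12_def by blast
  have gi1: "g1 integrable_on {a..b}" and gi2: "g2 integrable_on {a..b}"
    using g1(1) g2(1) absolutely_integrable_on_def by blast+
  obtain N1 where N1: "negligible N1" "\<forall>x\<in>{a<..<b} - N1. (v1 has_real_derivative g1 x) (at x)"
    using indef_integral_deriv_ae[OF gi1 g1(3)] by blast
  obtain N2 where N2: "negligible N2" "\<forall>x\<in>{a<..<b} - N2. (v2 has_real_derivative g2 x) (at x)"
    using indef_integral_deriv_ae[OF gi2 g2(3)] by blast
  have I1: "integral {a..b} g1 = q1 - p1" using g1(3)[of b] ab e by auto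
  have I2: "integral {a..b} g2 = q2 - p2" using g2(3)[of b] ab e by auto
  define S where "S = integral {a..b} (\<lambda>x. (g1 x)\<^sup>2 + (g2 x)\<^sup>2)"
  have Sint: "((\<lambda>x. (g1 x)\<^sup>2 + (g2 x)\<^sup>2) has_integral S) {a..b}"
    unfolding S_def using g1(2) g2(2) by (intro integrable_integral integrable_add)
  have "((\<lambda>x. ((g1 x)\<^sup>2 + (g2 x)\<^sup>2) - g1 x - g2 x + 1/2) has_integral (S - (q1 - p1) - (q2 - p2) + (b - a) / 2)) {a..b}"
  proof -
    have c: "((\<lambda>x. 1/2::real) has_integral (b-a)/2) {a..b}"
      using has_integral_const_real[of "1/2::real" a b] ab by simp
    show ?thesis
      by (intro has_integral_add has_integral_diff Sint c)
         (use gi1 gi2 I1 I2 in \<open>auto simp: integrable_integral[of g1, unfolded I1] dest: integrable_integral\<close>)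
  qed
  moreover have "\<And>x. x \<in> {a..b} \<Longrightarrow> 0 \<le> ((g1 x)\<^sup>2 + (g2 x)\<^sup>2) - g1 x - g2 x + 1/2"
  proof -
    fix x
    have "0 \<le> (g1 x - 1/2)\<^sup>2 + (g2 x - 1/2)\<^sup>2" by simp
    then show "0 \<le> ((g1 x)\<^sup>2 + (g2 x)\<^sup>2) - g1 x - g2 x + 1/2" by (simp add: power2_eq_square algebra_simps)
  qed
  ultimately have "0 \<le> S - (q1 - p1) - (q2 - p2) + (b - a) / 2"
    by (rule has_integral_nonneg)
  then have Sge: "(b-a)/2 \<le> S" using incr by (smt (verit) field_sum_of_halves)
  have Sint': "((\<lambda>x. (g1 x)\<^sup>2 + (g2 x)\<^sup>2) has_integral S) {a<..<b}"
    using Sint has_integral_Icc_iff_Ioo by blast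
  have nn: "(\<integral>\<^sup>+x. ennreal ((g1 x)\<^sup>2 + (g2 x)\<^sup>2) * indicator {a<..<b} x \<partial>lborel) = ennreal S"
    by (rule nn_integral_has_integral_lebesgue'[OF _ Sint']) simp
  have "negligible (N1 \<union> N2)" using N1 N2 by auto
  then have "N1 \<union> N2 \<in> null_sets lebesgue" using negligible_iff_null_sets by blast
  then have "AE x in lebesgue. x \<notin> N1 \<union> N2" by (rule AE_not_in)
  then have AEN: "AE x in lborel. x \<notin> N1 \<union> N2" by (simp add: AE_completion_iff)
  have "AE x in lborel. ennreal ((deriv v1 x)\<^sup>2 + (deriv v2 x)\<^sup>2) * indicator {a<..<b} x =
      ennreal ((g1 x)\<^sup>2 + (g2 x)\<^sup>2) * indicator {a<..<b} x"
    using AEN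
  proof eventually_elim
    case (elim x)
    show ?case
    proof (cases "x \<in> {a<..<b}")
      case True
      then have "deriv v1 x = g1 x" "deriv v2 x = g2 x"
        using N1(2) N2(2) elim DERIV_imp_deriv by blast+
      then show ?thesis by simp
    qed simp
  qed
  then have "Dir v1 v2 a b = ennreal S"
    unfolding Dir_def using nn by (simp add: nn_integral_cong_AE)
  then show ?thesis using Sge by (simp add: ennreal_leI)
qed



lemma cantor_Suc_iff:
  "(c,d) \<in> cantor_intervals (Suc n) \<longleftrightarrow>
    (\<exists>a b. (a,b) \<in> cantor_intervals n \<and> ((c,d) = (a, a+(b-a)/3) \<or> (c,d) = (b-(b-a)/3, b)))"
  by auto

lemma cantor_step_iff:
  "x \<in> cantor_step n \<longleftrightarrow> (\<exists>c d. (c,d) \<in> cantor_intervals n \<and> c \<le> x \<and> x \<le> d)"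
  unfolding cantor_step_def by force

lemma thirds2:
  fixes t k a b :: real assumes "t > 0" "a = k/t" "b = (k+1)/t"
  shows "a + (b-a)/3 = (3*k+1)/(3*t) \<and> b - (b-a)/3 = (3*k+2)/(3*t) \<and> a = (3*k)/(3*t) \<and> b = (3*k+3)/(3*t)"
  using assms by (simp add: field_simps)

lemma cantor_form:
  "(c,d) \<in> cantor_intervals n \<Longrightarrow>
    \<exists>k::int. 0 \<le> real_of_int k \<and> real_of_int k + 1 \<le> 3^n \<and> c = k / 3^n \<and> d = (real_of_int k + 1) / 3^n"
proof (induction n arbitrary: c d)
  case 0
  then show ?case by (intro exI[of _ 0]) auto
next
  case (Suc n)
  then obtain a b where ab: "(a,b) \<in> cantor_intervals n"
    and cd: "(c,d) = (a, a+(b-a)/3) \<or> (c,d) = (b-(b-a)/3, b)"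
    using cantor_Suc_iff by blast
  obtain k :: int where k: "0 \<le> real_of_int k" "real_of_int k + 1 \<le> 3^n" "a = k / 3^n" "b = (real_of_int k + 1) / 3^n"
    using Suc.IH[OF ab] by blast
  have p: "(3::real)^Suc n = 3 * 3^n" by simp
  have p3: "(3::real)^n > 0" by simp
  from cd show ?case
  proof
    assume "(c,d) = (a, a+(b-a)/3)"
    then have cd: "c = a" "d = a+(b-a)/3" by auto
    have T: "a + (b-a)/3 = (3*k+1)/(3*3^n)" "a = (3*k)/(3*3^n)"
      using thirds2[OF p3 k(3) k(4)] by auto
    have "c = of_int (3*k) / 3^Suc n" unfolding cd(1) T(2) p by simp
    moreover have "d = (of_int (3*k) + 1) / 3^Suc n" unfolding cd(2) T(1) p by simp
    ultimately have "c = of_int (3*k) / 3^Suc n" "d = (of_int (3*k) + 1) / 3^Suc n" by auto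
    moreover have "0 \<le> real_of_int (3*k)" "real_of_int (3*k) + 1 \<le> 3^Suc n" using k by auto
    ultimately show ?thesis by blast
  next
    assume "(c,d) = (b-(b-a)/3, b)"
    then have cd: "c = b-(b-a)/3" "d = b" by auto
    have T: "b - (b-a)/3 = (3*k+2)/(3*3^n)" "b = (3*k+3)/(3*3^n)"
      using thirds2[OF p3 k(3) k(4)] by auto
    have "c = of_int (3*k+2) / 3^Suc n" unfolding cd(1) T(1) p by simp
    moreover have "d = (of_int (3*k+2) + 1) / 3^Suc n" unfolding cd(2) T(2) p by (simp add: add.assoc)
    ultimately have "c = of_int (3*k+2) / 3^Suc n" "d = (of_int (3*k+2) + 1) / 3^Suc n" by auto
    moreover have "0 \<le> real_of_int (3*k+2)" "real_of_int (3*k+2) + 1 \<le> 3^Suc n" using k by auto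
    ultimately show ?thesis by blast
  qed
qed

lemma cantor_len: "(c,d) \<in> cantor_intervals n \<Longrightarrow> d - c = 1/3^n \<and> 0 \<le> c \<and> d \<le> 1"
proof -
  assume "(c,d) \<in> cantor_intervals n"
  then obtain k :: int where k: "0 \<le> real_of_int k" "real_of_int k + 1 \<le> 3^n" "c = k / 3^n" "d = (real_of_int k + 1) / 3^n"
    using cantor_form by blast
  have t: "(3::real)^n > 0" by simp
  have "d - c = 1/3^n" unfolding k using t by (simp add: field_simps)
  moreover have "0 \<le> c" unfolding k using k(1) t by simp
  moreover have "d \<le> 1" unfolding k using k(2) t by (simp add: divide_le_eq)
  ultimately show ?thesis by blast
qed

lemma removed_Suc: "removed_intervals (Suc i) = removed_intervals i \<union>
    (\<lambda>(a,b). (a + (b-a)/3, b - (b-a)/3)) ` cantor_intervals i"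
  unfolding removed_intervals_def by (auto simp: lessThan_Suc)

lemma removed_mono: "i \<le> j \<Longrightarrow> removed_intervals i \<subseteq> removed_intervals j"
  unfolding removed_intervals_def by (intro UN_mono) auto

lemma removed_form:
  "(c,d) \<in> removed_intervals i \<Longrightarrow>
    \<exists>n<i. \<exists>a b. (a,b) \<in> cantor_intervals n \<and> c = a + (b-a)/3 \<and> d = b - (b-a)/3"
  unfolding removed_intervals_def by auto

lemma cover:
  "x \<in> {0..1} \<Longrightarrow> x \<in> cantor_step i \<or> (\<exists>(c,d)\<in>removed_intervals i. c < x \<and> x < d)"
proof (induction i)
  case 0
  then show ?case by (simp add: cantor_step_def)
next
  case (Suc i)
  show ?case
  proof (cases "\<exists>(c,d)\<in>removed_intervals i. c < x \<and> x < d")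
    case True
    then show ?thesis using removed_mono[of i "Suc i"] by auto
  next
    case False
    then have "x \<in> cantor_step i" using Suc by blast
    then obtain a b where ab: "(a,b) \<in> cantor_intervals i" "a \<le> x" "x \<le> b"
      unfolding cantor_step_iff by auto
    consider "x \<le> a + (b-a)/3" | "b - (b-a)/3 \<le> x" | "a + (b-a)/3 < x \<and> x < b - (b-a)/3" by linarith
    then show ?thesis
    proof cases
      case 1
      have "(a, a+(b-a)/3) \<in> cantor_intervals (Suc i)" using ab by auto
      then have "x \<in> cantor_step (Suc i)" using 1 ab(2) unfolding cantor_step_iff by blast
      then show ?thesis by blast
    next
      case 2
      have "(b-(b-a)/3, b) \<in> cantor_intervals (Suc i)" using ab by auto
      then have "x \<in> cantor_step (Suc i)" using 2 ab(3) unfolding cantor_step_iff by blast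
      then show ?thesis by blast
    next
      case 3
      have "(a + (b-a)/3, b - (b-a)/3) \<in> removed_intervals (Suc i)" using ab by (auto simp: removed_Suc)
      then show ?thesis using 3 by blast
    qed
  qed
qed

lemma middle_not_cantor:
  assumes ab: "(a,b) \<in> cantor_intervals n" and x: "a + (b-a)/3 < x" "x < b - (b-a)/3"
  shows "x \<notin> cantor_step (Suc n)"
proof
  assume "x \<in> cantor_step (Suc n)"
  then obtain c d where cd: "(c,d) \<in> cantor_intervals (Suc n)" "c \<le> x" "x \<le> d"
    unfolding cantor_step_iff by auto
  then obtain a' b' where ab': "(a',b') \<in> cantor_intervals n"
    and cd': "(c,d) = (a', a'+(b'-a')/3) \<or> (c,d) = (b'-(b'-a')/3, b')"
    using cantor_Suc_iff by blast
  obtain k :: int where k: "a = k / 3^n" "b = (real_of_int k + 1) / 3^n" using cantor_form[OF ab] by blast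
  obtain j :: int where j: "a' = j / 3^n" "b' = (real_of_int j + 1) / 3^n" using cantor_form[OF ab'] by blast
  define y where "y = x * 3^Suc n"
  have p3: "(3::real)^n > 0" by simp
  have p3': "(3::real)^Suc n = 3 * 3^n" "(3::real) * 3^n > 0" by simp_all
  have T: "a + (b-a)/3 = (3*k+1)/(3*3^n)" "b - (b-a)/3 = (3*k+2)/(3*3^n)"
    using thirds2[OF p3 k(1) k(2)] by auto
  have "(3*k+1)/(3*3^n) < x" "x < (3*k+2)/(3*3^n)"
    using x unfolding T by auto
  then have yk: "3 * k + 1 < y" "y < 3 * k + 2"
    unfolding y_def p3'(1) using p3'(2) by (simp_all add: divide_less_eq less_divide_eq)
  from cd' show False
  proof
    assume "(c,d) = (a', a'+(b'-a')/3)"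
    then have cd2: "c = a'" "d = a'+(b'-a')/3" by auto
    have T: "a' + (b'-a')/3 = (3*j+1)/(3*3^n)" "a' = (3*j)/(3*3^n)"
      using thirds2[OF p3 j(1) j(2)] by auto
    have "(3*j)/(3*3^n) \<le> x" using cd(2) unfolding cd2(1) T(2) .
    moreover have "x \<le> (3*j+1)/(3*3^n)" using cd(3) unfolding cd2(2) T(1) .
    ultimately have "(3*j)/(3*3^n) \<le> x" "x \<le> (3*j+1)/(3*3^n)" by auto
    then have "3 * j \<le> y" "y \<le> 3 * j + 1"
      unfolding y_def p3'(1) using p3'(2) by (simp_all add: divide_le_eq le_divide_eq)
    with yk have "real_of_int (3*k+1) < real_of_int (3*j+1)" "real_of_int (3*j) < real_of_int (3*k+2)" by auto
    then have "3*k+1 < 3*j+1" "3*j < 3*k+2" by linarith+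
    then show False by presburger
  next
    assume "(c,d) = (b'-(b'-a')/3, b')"
    then have cd2: "c = b'-(b'-a')/3" "d = b'" by auto
    have T: "b' - (b'-a')/3 = (3*j+2)/(3*3^n)" "b' = (3*j+3)/(3*3^n)"
      using thirds2[OF p3 j(1) j(2)] by auto
    have "(3*j+2)/(3*3^n) \<le> x" using cd(2) unfolding cd2(1) T(1) .
    moreover have "x \<le> (3*j+3)/(3*3^n)" using cd(3) unfolding cd2(2) T(2) .
    ultimately have "(3*j+2)/(3*3^n) \<le> x" "x \<le> (3*j+3)/(3*3^n)" by auto
    then have "3 * j + 2 \<le> y" "y \<le> 3 * j + 3"
      unfolding y_def p3'(1) using p3'(2) by (simp_all add: divide_le_eq le_divide_eq)
    with yk have "real_of_int (3*k+1) < real_of_int (3*j+3)" "real_of_int (3*j+2) < real_of_int (3*k+2)" by auto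
    then have "3*k+1 < 3*j+3" "3*j+2 < 3*k+2" by linarith+
    then show False by presburger
  qed
qed

lemma removed_not_cantor:
  assumes "(c,d) \<in> removed_intervals i" "c < x" "x < d"
  shows "x \<notin> cantor_set"
proof -
  obtain n a b where "(a,b) \<in> cantor_intervals n" "c = a + (b-a)/3" "d = b - (b-a)/3"
    using removed_form[OF assms(1)] by blast
  then have "x \<notin> cantor_step (Suc n)" using middle_not_cantor assms by blast
  then show ?thesis unfolding cantor_set_def by blast
qed

lemma cantor_props: "(c,d) \<in> cantor_intervals n \<Longrightarrow> c \<in> \<rat> \<and> d \<in> \<rat> \<and> 0 \<le> c \<and> c < d \<and> d \<le> 1"
proof -
  assume ab: "(c,d) \<in> cantor_intervals n"
  obtain k :: int where k: "c = k / 3^n" "d = (real_of_int k + 1) / 3^n" using cantor_form[OF ab] by blast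
  have "c \<in> \<rat>" "d \<in> \<rat>" unfolding k by (auto intro!: Rats_divide Rats_add Rats_power)
  have pp: "(0::real) < 1/3^n" by simp
  have l: "d - c = 1/3^n" "0 \<le> c" "d \<le> 1" using cantor_len[OF ab] by auto
  have "c < d" using l(1) pp by linarith
  then show ?thesis using l \<open>c \<in> \<rat>\<close> \<open>d \<in> \<rat>\<close> by blast
qed

lemma removed_props:
  assumes "(c,d) \<in> removed_intervals i"
  shows "0 < c \<and> c < d \<and> d < 1 \<and> c \<in> \<rat> \<and> d \<in> \<rat>"
proof -
  obtain n a b where ab: "(a,b) \<in> cantor_intervals n" "c = a + (b-a)/3" "d = b - (b-a)/3"
    using removed_form[OF assms(1)] by blast
  obtain k :: int where k: "a = k / 3^n" "b = (real_of_int k + 1) / 3^n" using cantor_form[OF ab(1)] by blast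
  have l: "b - a = 1/3^n" "0 \<le> a" "b \<le> 1" using cantor_len[OF ab(1)] by auto
  have "a \<in> \<rat>" "b \<in> \<rat>" unfolding k by (auto intro!: Rats_divide Rats_add Rats_power)
  then have "c \<in> \<rat>" "d \<in> \<rat>" unfolding ab by (auto intro!: Rats_divide Rats_add Rats_diff)
  moreover have pp: "(0::real) < 1/3^n" by simp
  have L: "0 < b - a" using l(1) pp by linarith
  have "0 < c" "c < d" "d < 1" using l(2,3) ab(2,3) L by (simp_all add: field_simps)
  then have "0 < c \<and> c < d \<and> d < 1" by blast
  ultimately show ?thesis by blast
qed

lemma cantor_set_01: "cantor_set \<subseteq> {0..1}"
proof -
  have "cantor_step 0 = {0..1}" by (simp add: cantor_step_def)
  then show ?thesis unfolding cantor_set_def by blast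
qed

lemma cantor_approx:
  assumes "x \<in> cantor_set"
  shows "\<exists>y c d. y \<in> {0..1} \<and> \<bar>y - x\<bar> \<le> 1/3^n \<and> (c,d) \<in> removed_intervals (Suc n) \<and> c < y \<and> y < d"
proof -
  have "x \<in> cantor_step n" using assms unfolding cantor_set_def by blast
  then obtain a b where ab: "(a,b) \<in> cantor_intervals n" "a \<le> x" "x \<le> b"
    unfolding cantor_step_iff by auto
  have l: "b - a = 1/3^n" "0 \<le> a" "b \<le> 1" using cantor_len[OF ab(1)] by auto
  have r: "(a + (b-a)/3, b - (b-a)/3) \<in> removed_intervals (Suc n)" using ab by (auto simp: removed_Suc)
  have pos: "(0::real) < 1/3^n" by simp
  have L: "0 < b - a" using l pos by simp
  have h1: "(a+b)/2 \<in> {0..1}" using l(2,3) L by simp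
  have h2: "\<bar>(a+b)/2 - x\<bar> \<le> 1/3^n" unfolding l(1)[symmetric] using ab(2,3) unfolding abs_le_iff by (simp add: field_simps)
  have h3: "a + (b-a)/3 < (a+b)/2" "(a+b)/2 < b - (b-a)/3" using L by (simp_all add: field_simps)
  note h = h1 h2 h3
  show ?thesis using h r by blast
qed

lemma finite_cantor: "finite (cantor_intervals n)"
  by (induction n) auto

lemma card_cantor: "card (cantor_intervals n) \<le> 2^n"
proof (induction n)
  case 0 then show ?case by simp
next
  case (Suc n)
  have "card (cantor_intervals (Suc n)) \<le> (\<Sum>p\<in>cantor_intervals n. card ((\<lambda>(a,b). {(a, a + (b-a)/3), (b - (b-a)/3, b)}) p))"
    unfolding cantor_intervals.simps by (rule card_UN_le[OF finite_cantor])
  also have "\<dots> \<le> (\<Sum>p\<in>cantor_intervals n. 2)"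
    by (rule sum_mono) (auto simp: card_insert_if)
  also have "\<dots> \<le> 2 * 2^n" using Suc by simp
  finally show ?case by simp
qed

lemma finite_removed: "finite (removed_intervals i)"
  unfolding removed_intervals_def using finite_cantor by auto

lemma cantor_step_meas:
  "cantor_step n \<in> lmeasurable \<and> measure lebesgue (cantor_step n) \<le> (2/3)^n"
proof -
  have m: "cantor_step n \<in> lmeasurable"
    unfolding cantor_step_def using finite_cantor by (intro fmeasurable.finite_UN) auto
  have "measure lebesgue (cantor_step n) \<le> (\<Sum>p\<in>cantor_intervals n. measure lebesgue ((\<lambda>(a,b). {a..b}) p))"
    unfolding cantor_step_def by (rule measure_UNION_le[OF finite_cantor]) auto
  also have "\<dots> = (\<Sum>p\<in>cantor_intervals n. 1/3^n)"
  proof (rule sum.cong)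
    fix p assume "p \<in> cantor_intervals n"
    moreover obtain a b where "p = (a,b)" by fastforce
    ultimately have ba: "b - a = 1/3^n" using cantor_len by blast
    moreover have "(0::real) < 1/3^n" by simp
    ultimately have "a \<le> b" by linarith
    with ba show "measure lebesgue ((\<lambda>(a,b). {a..b}) p) = 1/3^n" using \<open>p = (a,b)\<close> by simp
  qed simp
  also have "\<dots> = card (cantor_intervals n) / 3^n" by simp
  also have "\<dots> \<le> 2^n / 3^n"
    using card_cantor[of n] by (simp add: divide_right_mono)
  also have "\<dots> = (2/3)^n" by (simp add: power_divide)
  finally show ?thesis using m by blast
qed

lemma cantor_negligible: "negligible cantor_set"
proof (unfold negligible_outer_le, intro allI impI)
  fix e :: real assume e: "e > 0"
  obtain n where n: "(2/3::real)^n < e" using real_arch_pow_inv[OF e, of "2/3"] by auto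
  have s: "cantor_set \<subseteq> cantor_step n" unfolding cantor_set_def by blast
  have m: "cantor_step n \<in> lmeasurable" and le: "measure lebesgue (cantor_step n) \<le> (2/3)^n"
    using cantor_step_meas[of n] by auto
  have le': "measure lebesgue (cantor_step n) \<le> e" using le n by linarith
  show "\<exists>T. cantor_set \<subseteq> T \<and> T \<in> lmeasurable \<and> measure lebesgue T \<le> e"
    using s m le' by blast
qed



lemma diamond_lt:
  assumes "is_diamond f1 f2 c d" "c < y" "y < d"
  shows "f1 y < f2 y"
proof -
  obtain h where h: "\<forall>x\<in>{c..d}. f1 x = (if x \<le> (c+d)/2 then h else h + (x - (c+d)/2)) \<and>
      f2 x = (if x \<le> (c+d)/2 then h + (x - c) else h + (d-c)/2)"
    using assms(1) unfolding is_diamond_def by blast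
  have "y \<in> {c..d}" using assms by auto
  then show ?thesis using h assms(2,3) by (cases "y \<le> (c+d)/2") (auto simp: field_simps)
qed

lemma diamond_deriv:
  assumes "is_diamond f1 f2 c d" "c < x" "x < d" "x \<noteq> (c+d)/2"
  shows "(\<exists>D1 D2. (f1 has_real_derivative D1) (at x) \<and> (f2 has_real_derivative D2) (at x) \<and>
            D1\<^sup>2 + D2\<^sup>2 = 1 \<and> D1 + D2 = 1)"
proof -
  obtain h where h: "\<forall>x\<in>{c..d}. f1 x = (if x \<le> (c+d)/2 then h else h + (x - (c+d)/2)) \<and>
      f2 x = (if x \<le> (c+d)/2 then h + (x - c) else h + (d-c)/2)"
    using assms(1) unfolding is_diamond_def by blast
  show ?thesis
  proof (cases "x < (c+d)/2")
    case True
    have e1: "f1 y = h" "f2 y = h + (y - c)" if "y \<in> {c<..<(c+d)/2}" for y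
      using h that by auto
    have d1: "(f1 has_real_derivative 0) (at x)"
      by (rule has_field_derivative_transform_within_open[of "\<lambda>_. h" 0 x "{c<..<(c+d)/2}"])
         (use e1 True assms in auto)
    have d2: "(f2 has_real_derivative 1) (at x)"
      by (rule has_field_derivative_transform_within_open[of "\<lambda>y. h + (y - c)" 1 x "{c<..<(c+d)/2}"])
         (use e1 True assms in \<open>auto intro!: derivative_eq_intros\<close>)
    show ?thesis using d1 d2 by force
  next
    case False
    then have F: "(c+d)/2 < x" using assms(4) by auto
    have e1: "f1 y = h + (y - (c+d)/2)" "f2 y = h + (d-c)/2" if "y \<in> {(c+d)/2<..<d}" for y
      using h that by auto
    have d1: "(f1 has_real_derivative 1) (at x)"
      by (rule has_field_derivative_transform_within_open[of "\<lambda>y. h + (y - (c+d)/2)" 1 x "{(c+d)/2<..<d}"])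
         (use e1 F assms in \<open>auto intro!: derivative_eq_intros\<close>)
    have d2: "(f2 has_real_derivative 0) (at x)"
      by (rule has_field_derivative_transform_within_open[of "\<lambda>_. h + (d-c)/2" 0 x "{(c+d)/2<..<d}"])
         (use e1 F assms in auto)
    show ?thesis using d1 d2 by force
  qed
qed

lemma line_deriv:
  assumes "is_double_line f1 f2 c d" "c < x" "x < d"
  shows "((\<lambda>y. f1 y + f2 y - y) has_real_derivative 1) (at x)"
proof -
  obtain p where p: "\<forall>x\<in>{c..d}. f1 x = x + p \<and> f2 x = x + p"
    using assms(1) unfolding is_double_line_def by blast
  show ?thesis
    by (rule has_field_derivative_transform_within_open[of "\<lambda>y. y + 2*p" 1 x "{c<..<d}"])
       (use p assms in \<open>auto intro!: derivative_eq_intros\<close>)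
qed

lemma w_mono:
  fixes f1 f2 :: "real \<Rightarrow> real" and i :: nat
  assumes pd: "pluri_diamond f1 f2"
    and diam: "\<And>c d. (c,d) \<in> removed_intervals i \<Longrightarrow> is_diamond f1 f2 c d"
    and line: "\<And>c d. (c,d) \<in> cantor_intervals i \<Longrightarrow> is_double_line f1 f2 c d"
    and ab: "0 \<le> a" "a \<le> b" "b \<le> 1"
  shows "f1 a + f2 a - a \<le> f1 b + f2 b - b"
proof -
  define f where "f = (\<lambda>x. f1 x + f2 x - x)"
  have cont: "continuous_on {a..b} f"
  proof -
    have "continuous_on {0..1} f1" "continuous_on {0..1} f2" using pd unfolding pluri_diamond_def by auto
    then have "continuous_on {0..1} f" unfolding f_def by (intro continuous_intros)
    then show ?thesis by (rule continuous_on_subset) (use ab in auto)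
  qed
  define R where "R = removed_intervals i"
  define C where "C = cantor_intervals i"
  define S where "S = fst ` R \<union> snd ` R \<union> (\<lambda>p. (fst p + snd p)/2) ` R \<union> fst ` C \<union> snd ` C"
  have finS: "finite S" unfolding S_def R_def C_def using finite_removed finite_cantor by auto
  define f' where "f' = (\<lambda>x. if \<exists>(c,d)\<in>R. c < x \<and> x < d then 0 else 1::real)"
  have der: "(f has_vector_derivative f' x) (at x)" if x: "x \<in> {a<..<b} - S" for x
  proof -
    have x01: "x \<in> {0..1}" using x ab by auto
    show ?thesis
    proof (cases "\<exists>(c,d)\<in>R. c < x \<and> x < d")
      case True
      then obtain c d where cd: "(c,d) \<in> R" "c < x" "x < d" by blast
      have "x \<noteq> (c+d)/2" using x cd(1) unfolding S_def by force
      then obtain D1 D2 where D: "(f1 has_real_derivative D1) (at x)" "(f2 has_real_derivative D2) (at x)" "D1 + D2 = 1"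
        using diamond_deriv[OF diam[of c d] cd(2,3)] cd(1) R_def by blast
      have "(f has_real_derivative (D1 + D2 - 1)) (at x)"
        unfolding f_def using DERIV_diff[OF DERIV_add[OF D(1) D(2)] DERIV_ident] by simp
      then show ?thesis using True D(3) by (simp add: f'_def has_real_derivative_iff_has_vector_derivative)
    next
      case False
      then have "x \<in> cantor_step i" using cover[OF x01] R_def by blast
      then obtain c d where cd: "(c,d) \<in> C" "c \<le> x" "x \<le> d" unfolding cantor_step_iff C_def by blast
      have "x \<noteq> c" "x \<noteq> d" using x cd(1) unfolding S_def by force+
      then have "c < x" "x < d" using cd by auto
      then have "(f has_real_derivative 1) (at x)"
        unfolding f_def using line_deriv line cd(1) C_def by blast
      then show ?thesis using False by (simp add: f'_def has_real_derivative_iff_has_vector_derivative)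
    qed
  qed
  have "(f' has_integral f b - f a) {a..b}"
    by (rule fundamental_theorem_of_calculus_interior_strong[OF finS ab(2) der cont])
  moreover have "\<And>x. x \<in> {a..b} \<Longrightarrow> 0 \<le> f' x" by (simp add: f'_def)
  ultimately have "0 \<le> f b - f a" by (rule has_integral_nonneg)
  then show ?thesis unfolding f_def by simp
qed

lemma diamond_limit:
  assumes ev: "\<forall>\<^sub>F k in sequentially. is_diamond (f k) (g k) c d"
    and lf: "\<And>x. x \<in> {c..d} \<Longrightarrow> (\<lambda>k. f k x) \<longlonglongrightarrow> F x"
    and lg: "\<And>x. x \<in> {c..d} \<Longrightarrow> (\<lambda>k. g k x) \<longlonglongrightarrow> G x"
  shows "is_diamond F G c d"
proof -
  have cd: "c < d" using eventually_happens[OF ev] unfolding is_diamond_def by auto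
  define m where "m = (c+d)/2"
  have ev2: "\<forall>\<^sub>F k in sequentially. \<forall>x\<in>{c..d}.
      f k x = (if x \<le> m then f k c else f k c + (x - m)) \<and>
      g k x = (if x \<le> m then f k c + (x - c) else f k c + (d-c)/2)"
    using ev
  proof eventually_elim
    case (elim k)
    then obtain h where h: "\<forall>x\<in>{c..d}. f k x = (if x \<le> m then h else h + (x - m)) \<and>
      g k x = (if x \<le> m then h + (x - c) else h + (d-c)/2)" unfolding is_diamond_def m_def by blast
    have "f k c = h" using h cd by (auto simp: m_def)
    then show ?case using h by simp
  qed
  have "\<forall>x\<in>{c..d}. F x = (if x \<le> m then F c else F c + (x - m)) \<and>
      G x = (if x \<le> m then F c + (x - c) else F c + (d-c)/2)"
  proof
    fix x assume x: "x \<in> {c..d}"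
    have c: "c \<in> {c..d}" using cd by auto
    have t1: "(\<lambda>k. (if x \<le> m then f k c else f k c + (x - m))) \<longlonglongrightarrow> (if x \<le> m then F c else F c + (x - m))"
      using lf[OF c] by (cases "x \<le> m") (auto intro!: tendsto_intros)
    have t2: "(\<lambda>k. (if x \<le> m then f k c + (x - c) else f k c + (d-c)/2)) \<longlonglongrightarrow> (if x \<le> m then F c + (x - c) else F c + (d-c)/2)"
      using lf[OF c] by (cases "x \<le> m") (auto intro!: tendsto_intros)
    have e1: "\<forall>\<^sub>F k in sequentially. f k x = (if x \<le> m then f k c else f k c + (x - m))"
      using ev2 by eventually_elim (use x in blast)
    have e2: "\<forall>\<^sub>F k in sequentially. g k x = (if x \<le> m then f k c + (x - c) else f k c + (d-c)/2)"
      using ev2 by eventually_elim (use x in blast)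
    have "(\<lambda>k. f k x) \<longlonglongrightarrow> (if x \<le> m then F c else F c + (x - m))"
      by (rule Lim_transform_eventually[OF t1]) (use e1 in \<open>auto elim: eventually_mono\<close>)
    then have A: "F x = (if x \<le> m then F c else F c + (x - m))"
      using lf[OF x] LIMSEQ_unique by blast
    have "(\<lambda>k. g k x) \<longlonglongrightarrow> (if x \<le> m then F c + (x - c) else F c + (d-c)/2)"
      by (rule Lim_transform_eventually[OF t2]) (use e2 in \<open>auto elim: eventually_mono\<close>)
    then have B: "G x = (if x \<le> m then F c + (x - c) else F c + (d-c)/2)"
      using lg[OF x] LIMSEQ_unique by blast
    show "F x = (if x \<le> m then F c else F c + (x - m)) \<and>
      G x = (if x \<le> m then F c + (x - c) else F c + (d-c)/2)" using A B by blast
  qed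
  then show ?thesis unfolding is_diamond_def m_def using cd by blast
qed



lemma Dir_upper:
  assumes Dl: "\<And>n c d. (c,d) \<in> removed_intervals n \<Longrightarrow> is_diamond f1 f2 c d"
    and ab: "0 \<le> a" "a < b" "b \<le> 1"
  shows "Dir f1 f2 a b \<le> ennreal (b - a)"
proof -
  have "negligible (\<Union>((\<lambda>q. {q}) ` (\<rat>::real set)))"
    by (intro negligible_countable_Union countable_image countable_rat) auto
  then have nq: "negligible (\<rat>::real set)" by simp
  have neg: "negligible (cantor_set \<union> \<rat>)"
    by (intro negligible_Un cantor_negligible nq)
  then have "cantor_set \<union> \<rat> \<in> null_sets lebesgue" using negligible_iff_null_sets by blast
  then have "AE x in lebesgue. x \<notin> cantor_set \<union> \<rat>" by (rule AE_not_in)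
  then have AEN: "AE x in lborel. x \<notin> cantor_set \<union> \<rat>" by (simp add: AE_completion_iff)
  have pt: "(deriv f1 x)\<^sup>2 + (deriv f2 x)\<^sup>2 = 1"
    if x: "x \<in> {a<..<b}" "x \<notin> cantor_set" "x \<notin> \<rat>" for x
  proof -
    have x01: "x \<in> {0..1}" using x ab by auto
    obtain i where "x \<notin> cantor_step i" using x(2) unfolding cantor_set_def by blast
    then obtain c d where cd: "(c,d) \<in> removed_intervals i" "c < x" "x < d"
      using cover[OF x01, of i] by blast
    have "c \<in> \<rat>" "d \<in> \<rat>" using removed_props[OF cd(1)] by auto
    then have "(c+d)/2 \<in> \<rat>" by (intro Rats_divide Rats_add) auto
    then have "x \<noteq> (c+d)/2" using x(3) by metis
    then obtain D1 D2 where D: "(f1 has_real_derivative D1) (at x)" "(f2 has_real_derivative D2) (at x)"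
        "D1\<^sup>2 + D2\<^sup>2 = 1"
      using diamond_deriv[OF Dl[OF cd(1)] cd(2,3)] by blast
    show ?thesis using D DERIV_imp_deriv by metis
  qed
  have "AE x in lborel. ennreal ((deriv f1 x)\<^sup>2 + (deriv f2 x)\<^sup>2) * indicator {a<..<b} x \<le> indicator {a<..<b} x"
    using AEN
  proof eventually_elim
    case (elim x)
    show ?case
    proof (cases "x \<in> {a<..<b}")
      case True
      then show ?thesis using pt[OF True] elim by simp
    qed simp
  qed
  then have "Dir f1 f2 a b \<le> (\<integral>\<^sup>+x. indicator {a<..<b} x \<partial>lborel)"
    unfolding Dir_def by (rule nn_integral_mono_AE)
  also have "\<dots> = ennreal (b - a)" using ab by simp
  finally show ?thesis .
qed

theorem mainTheorem5:
  fixes umin umax :: "nat \<Rightarrow> real \<Rightarrow> real"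
    and r :: "nat \<Rightarrow> nat"
    and vmin vmax :: "real \<Rightarrow> real"
  assumes pd: "\<And>i. i \<ge> 1 \<Longrightarrow> pluri_diamond (umin i) (umax i)"
    and third: "\<And>i. i \<ge> 1 \<Longrightarrow> umin i (1/3) = 0 \<and> umax i (1/3) = 0"
    and diam: "\<And>i c d. i \<ge> 1 \<Longrightarrow> (c, d) \<in> removed_intervals i \<Longrightarrow>
                 is_diamond (umin i) (umax i) c d"
    and line: "\<And>i c d. i \<ge> 1 \<Longrightarrow> (c, d) \<in> cantor_intervals i \<Longrightarrow>
                 is_double_line (umin i) (umax i) c d"
    and sub: "strict_mono r"
    and lim_min: "uniform_limit {0..1} (\<lambda>k. umin (r k)) vmin sequentially"
    and lim_max: "uniform_limit {0..1} (\<lambda>k. umax (r k)) vmax sequentially"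
  shows "dir_quasiminimizer 4 vmin vmax \<and> branch_set vmin vmax = cantor_set"
proof -
  have pt_min: "(\<lambda>k. umin (r k) x) \<longlonglongrightarrow> vmin x" if "x \<in> {0..1}" for x
    using tendsto_uniform_limitI[OF lim_min that] .
  have pt_max: "(\<lambda>k. umax (r k) x) \<longlonglongrightarrow> vmax x" if "x \<in> {0..1}" for x
    using tendsto_uniform_limitI[OF lim_max that] .
  have evn: "\<forall>\<^sub>F k in sequentially. n \<le> r k" for n
    by (rule eventually_sequentiallyI[of n]) (metis seq_suble[OF sub] le_trans)
  have Dl: "is_diamond vmin vmax c d" if cd: "(c,d) \<in> removed_intervals n" for n c d
  proof -
    have n1: "1 \<le> n" using cd by (cases n) (auto simp: removed_intervals_def)
    have sub01: "{c..d} \<subseteq> {0..1}" using removed_props[OF cd] by auto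
    show ?thesis
    proof (rule diamond_limit[of "\<lambda>k. umin (r k)" "\<lambda>k. umax (r k)"])
      show "\<forall>\<^sub>F k in sequentially. is_diamond (umin (r k)) (umax (r k)) c d"
        using evn[of n]
      proof eventually_elim
        case (elim k)
        then have "(c,d) \<in> removed_intervals (r k)" using removed_mono[OF elim] cd by blast
        then show ?case using diam[of "r k"] elim n1 by auto
      qed
      show "\<And>x. x \<in> {c..d} \<Longrightarrow> (\<lambda>k. umin (r k) x) \<longlonglongrightarrow> vmin x" using pt_min sub01 by blast
      show "\<And>x. x \<in> {c..d} \<Longrightarrow> (\<lambda>k. umax (r k) x) \<longlonglongrightarrow> vmax x" using pt_max sub01 by blast
    qed
  qed
  have Cl: "vmin x = vmax x" if x: "x \<in> cantor_set" for x
  proof -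
    have x01: "x \<in> {0..1}" using cantor_set_01 x by blast
    have ev: "\<forall>\<^sub>F k in sequentially. umax (r k) x = umin (r k) x"
      using evn[of 1]
    proof eventually_elim
      case (elim k)
      have "x \<in> cantor_step (r k)" using x unfolding cantor_set_def by blast
      then obtain c d where cd: "(c,d) \<in> cantor_intervals (r k)" "c \<le> x" "x \<le> d"
        unfolding cantor_step_iff by blast
      then show ?case using line[OF elim cd(1)] unfolding is_double_line_def by auto
    qed
    have "(\<lambda>k. umin (r k) x) \<longlonglongrightarrow> vmax x"
      by (rule Lim_transform_eventually[OF pt_max[OF x01] ev])
    then show "vmin x = vmax x" using pt_min[OF x01] LIMSEQ_unique by blast
  qed
  have mono: "vmin a + vmax a - a \<le> vmin b + vmax b - b"
    if ab: "0 \<le> a" "a \<le> b" "b \<le> 1" for a b :: real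
  proof -
    have a01: "a \<in> {0..1}" and b01: "b \<in> {0..1}" using ab by auto
    have ev: "\<forall>\<^sub>F k in sequentially. umin (r k) a + umax (r k) a - a \<le> umin (r k) b + umax (r k) b - b"
      using evn[of 1]
    proof eventually_elim
      case (elim k)
      show ?case by (rule w_mono[OF pd[OF elim] diam[OF elim] line[OF elim] ab])
    qed
    have t1: "(\<lambda>k. umin (r k) a + umax (r k) a - a) \<longlonglongrightarrow> vmin a + vmax a - a"
      by (intro tendsto_intros pt_min pt_max a01)
    have t2: "(\<lambda>k. umin (r k) b + umax (r k) b - b) \<longlonglongrightarrow> vmin b + vmax b - b"
      by (intro tendsto_intros pt_min pt_max b01)
    show ?thesis by (rule tendsto_le[OF sequentially_bot t2 t1 ev])
  qed
  have part1: "dir_quasiminimizer 4 vmin vmax"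
    unfolding dir_quasiminimizer_def
  proof (intro allI impI)
    fix a b v1 v2
    assume ab: "0 \<le> a \<and> a < b \<and> b \<le> 1"
      and dm: "dir_minimizing a b (vmin a) (vmax a) (vmin b) (vmax b) v1 v2"
    have adm: "admissible a b (vmin a) (vmax a) (vmin b) (vmax b) v1 v2"
      using dm unfolding dir_minimizing_def by blast
    have incr: "b - a \<le> vmin b + vmax b - vmin a - vmax a" using mono[of a b] ab by linarith
    have lo: "ennreal ((b-a)/2) \<le> Dir v1 v2 a b"
      by (rule admissible_Dir_lower[OF adm _ incr]) (use ab in auto)
    have up: "Dir vmin vmax a b \<le> ennreal (b - a)"
      by (rule Dir_upper[OF Dl]) (use ab in auto)
    have "ennreal (b - a) \<le> ennreal (4 * ((b-a)/2))" using ab by (intro ennreal_leI) simp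
    also have "\<dots> = ennreal 4 * ennreal ((b-a)/2)" by (rule ennreal_mult) (use ab in auto)
    also have "\<dots> \<le> ennreal 4 * Dir v1 v2 a b" using lo by (rule mult_left_mono) simp
    finally show "Dir vmin vmax a b \<le> ennreal 4 * Dir v1 v2 a b" using up by (meson order_trans)
  qed
  have part2: "branch_set vmin vmax = cantor_set"
  proof
    show "branch_set vmin vmax \<subseteq> cantor_set"
    proof
      fix x assume xb: "x \<in> branch_set vmin vmax"
      then have x01: "x \<in> {0..1}"
        and nc: "\<not> continuous (at x within {0..1}) (\<lambda>y. real (card {vmin y, vmax y}))"
        unfolding branch_set_def by auto
      show "x \<in> cantor_set"
      proof (rule ccontr)
        assume "x \<notin> cantor_set"
        then obtain i where "x \<notin> cantor_step i" unfolding cantor_set_def by blast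
        then obtain c d where cd: "(c,d) \<in> removed_intervals i" "c < x" "x < d"
          using cover[OF x01, of i] by blast
        have eq: "(\<lambda>y. 2::real) y = real (card {vmin y, vmax y})" if "y \<in> {c<..<d}" for y
        proof -
          have "vmin y < vmax y" using diamond_lt[OF Dl[OF cd(1)]] that by auto
          then show ?thesis by simp
        qed
        have "continuous_on {c<..<d} (\<lambda>y. real (card {vmin y, vmax y}))"
          by (rule continuous_on_eq[OF continuous_on_const eq])
        then have "\<forall>z\<in>{c<..<d}. isCont (\<lambda>y. real (card {vmin y, vmax y})) z"
          using continuous_on_eq_continuous_at[OF open_greaterThanLessThan] by blast
        then have "isCont (\<lambda>y. real (card {vmin y, vmax y})) x" using cd by simp
        then have "continuous (at x within {0..1}) (\<lambda>y. real (card {vmin y, vmax y}))"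
          by (rule continuous_at_imp_continuous_at_within)
        with nc show False by contradiction
      qed
    qed
    show "cantor_set \<subseteq> branch_set vmin vmax"
    proof
      fix x assume x: "x \<in> cantor_set"
      have x01: "x \<in> {0..1}" using cantor_set_01 x by blast
      have fx: "real (card {vmin x, vmax x}) = 1" using Cl[OF x] by simp
      have "\<not> continuous (at x within {0..1}) (\<lambda>y. real (card {vmin y, vmax y}))"
      proof
        assume c: "continuous (at x within {0..1}) (\<lambda>y. real (card {vmin y, vmax y}))"
        have "\<exists>\<delta>>0. \<forall>y\<in>{0..1}. dist y x < \<delta> \<longrightarrow>
            dist (real (card {vmin y, vmax y})) (real (card {vmin x, vmax x})) < 1/2"
          using c unfolding continuous_within_eps_delta
          by (erule_tac x="1/2" in allE) simp
        then obtain \<delta> where \<delta>: "\<delta> > 0" "\<forall>y\<in>{0..1}. dist y x < \<delta> \<longrightarrow>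
            dist (real (card {vmin y, vmax y})) (real (card {vmin x, vmax x})) < 1/2" by blast
        obtain n where n: "(1/3::real)^n < \<delta>" using real_arch_pow_inv[OF \<delta>(1), of "1/3"] by auto
        then have n': "1/3^n < \<delta>" by (simp add: power_one_over)
        obtain y c d where y: "y \<in> {0..1}" "\<bar>y - x\<bar> \<le> 1/3^n" "(c,d) \<in> removed_intervals (Suc n)" "c < y" "y < d"
          using cantor_approx[OF x] by blast
        have "vmin y < vmax y" using diamond_lt[OF Dl[OF y(3)] y(4,5)] .
        then have fy: "real (card {vmin y, vmax y}) = 2" by simp
        have "dist y x < \<delta>" using y(2) n' by (simp add: dist_real_def)
        then have "dist (real (card {vmin y, vmax y})) (real (card {vmin x, vmax x})) < 1/2"
          using \<delta>(2) y(1) by blast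
        then show False using fx fy by (simp add: dist_real_def)
      qed
      then show "x \<in> branch_set vmin vmax" using x01 unfolding branch_set_def by blast
    qed
  qed
  show ?thesis using part1 part2 by blast
qed


end
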